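(* Consider the wireless network described in the context, with nodes sending independent codewords under decode-and-forward. Let $\mathcal{M}^{\mathrm{MSPA}}$ be the route output by the maximum sum-of-received-power algorithm (MSPA), with ties broken arbitrarily. Then $\mathcal{M}^{\mathrm{MSPA}}$ is optimal for DF, i.e., $$R_{\mathrm{DF}}(\mathcal{M}^{\mathrm{MSPA}})=R_{\mathrm{DF}}^{\max}.$$
   Context: Network: a finite set of nodes $\mathcal{S}=\{1,2,\dots,D\}$, $D\ge 2$. Node $1$ is the source and node $D$ is the destination. Received powers: for distinct nodes $i,t$, the power received at $t$ from $i$ is a positive real number $P_{it}$. All receivers have the same noise power $N>0$. Routes: a route is an ordered tuple of distinct nodes $\mathcal{M}=(m_1,\dots,m_L)$ with $m_1=1$ and $L\ge1$. It is a route from the source to the destination if moreover $m_L=D$. For $a\notin\mathcal{M}$, $\mathcal{M}\cup\{a\}$ denotes $(m_1,\dots,m_L,a)$. DF with independent codewords: the reception rate of node $m_t$ ($2\le t\le L$) in route $\mathcal{M}$ is $$R_{m_t}(\mathcal{M})=\tfrac12\log\Big(1+N^{-1}\sum_{i=1}^{t-1}P_{m_i m_t}\Big).$$ The supported DF rate (for $L\ge2$) is $R_{\mathrm{DF}}(\mathcal{M})=\min_{2\le t\le L}R_{m_t}(\mathcal{M})$. Also $R_{\mathrm{DF}}^{\max}=\max R_{\mathrm{DF}}(\mathcal{M})$ over all routes from $1$ to $D$. MSPA: 1. Start with $\mathcal{M}=(1)$. 2. Choose any node $a^*\in\mathcal{S}\setminus\mathcal{M}$ maximizing $\sum_{i\in\mathcal{M}}P_{it}$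 over $t\in\mathcal{S}\setminus\mathcal{M}$, and set $\mathcal{M}\leftarrow\mathcal{M}\cup\{a^*\}$. 3. Repeat step 2 until $D$ has been appended; output $\mathcal{M}$. *)

theory Defs
  imports Complex_Main
begin

text \<open>Nodes are 1..D; node 1 is the source, node D the destination.
  P i t is the power received at t from i; N is the noise power.
  A route is a list of distinct nodes starting with the source.\<close>

definition nodes :: "nat \<Rightarrow> nat set" where
  "nodes D = {1..D}"

definition is_route :: "nat \<Rightarrow> nat list \<Rightarrow> bool" where
  "is_route D M \<longleftrightarrow> M \<noteq> [] \<and> distinct M \<and> hd M = 1 \<and> set M \<subseteq> nodes D"

definition is_route_SD :: "nat \<Rightarrow> nat list \<Rightarrow> bool" where
  "is_route_SD D M \<longleftrightarrow> is_route D M \<and> last M = D"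

text \<open>Reception rate of the node at (0-based) position t of the route, 1 \<le> t < length M,
  i.e. node m_{t+1} in the paper's 1-based indexing.\<close>
definition rx_rate :: "(nat \<Rightarrow> nat \<Rightarrow> real) \<Rightarrow> real \<Rightarrow> nat list \<Rightarrow> nat \<Rightarrow> real" where
  "rx_rate P N M t = (1/2) * log 2 (1 + (\<Sum>i<t. P (M ! i) (M ! t)) / N)"

definition R_DF :: "(nat \<Rightarrow> nat \<Rightarrow> real) \<Rightarrow> real \<Rightarrow> nat list \<Rightarrow> real" where
  "R_DF P N M = Min (rx_rate P N M ` {1..<length M})"

definition R_DF_max :: "(nat \<Rightarrow> nat \<Rightarrow> real) \<Rightarrow> real \<Rightarrow> nat \<Rightarrow> real" where
  "R_DF_max P N D = Max (R_DF P N ` {M. is_route_SD D M})"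

text \<open>MSPA with arbitrary tie-breaking: all partial routes reachable by the algorithm.\<close>
inductive mspa_reach :: "(nat \<Rightarrow> nat \<Rightarrow> real) \<Rightarrow> nat \<Rightarrow> nat list \<Rightarrow> bool"
  for P :: "nat \<Rightarrow> nat \<Rightarrow> real" and D :: nat where
  start: "mspa_reach P D [1]"
| step: "\<lbrakk> mspa_reach P D M; D \<notin> set M; a \<in> nodes D - set M;
           \<forall>t \<in> nodes D - set M. (\<Sum>i\<in>set M. P i t) \<le> (\<Sum>i\<in>set M. P i a) \<rbrakk>
         \<Longrightarrow> mspa_reach P D (M @ [a])"

definition mspa_output :: "(nat \<Rightarrow> nat \<Rightarrow> real) \<Rightarrow> nat \<Rightarrow> nat list \<Rightarrow> bool" where
  "mspa_output P D M \<longleftrightarrow> mspa_reach P D M \<and> D \<in> set M"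

end

theory Submission
  imports Defs
begin

lemma reach_props:
  assumes "mspa_reach P D M" "D \<ge> 1"
  shows "M \<noteq> [] \<and> distinct M \<and> hd M = 1 \<and> set M \<subseteq> nodes D \<and> D \<notin> set (butlast M) \<and>
    (\<forall>k. 1 \<le> k \<and> k < length M \<longrightarrow>
       (\<forall>t\<in>nodes D - set (take k M). (\<Sum>i\<in>set (take k M). P i t) \<le> (\<Sum>i\<in>set (take k M). P i (M!k))))"
  using assms
proof (induction rule: mspa_reach.induct)
  case start
  then show ?case by (auto simp: nodes_def)
next
  case (step M a)
  have A: "M \<noteq> [] \<and> distinct M \<and> hd M = 1 \<and> set M \<subseteq> nodes D" using step by auto
  have B: "\<forall>k. 1 \<le> k \<and> k < length (M@[a]) \<longrightarrow>
       (\<forall>t\<in>nodes D - set (take k (M@[a])). (\<Sum>i\<in>set (take k (M@[a])). P i t) \<le> (\<Sum>i\<in>set (take k (M@[a])). P i ((M@[a])!k)))"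
  proof (intro allI impI)
    fix k assume k: "1 \<le> k \<and> k < length (M@[a])"
    show "\<forall>t\<in>nodes D - set (take k (M@[a])). (\<Sum>i\<in>set (take k (M@[a])). P i t) \<le> (\<Sum>i\<in>set (take k (M@[a])). P i ((M@[a])!k))"
    proof (cases "k < length M")
      case True
      then show ?thesis using step k by (auto simp: nth_append)
    next
      case False
      then have "k = length M" using k by auto
      then show ?thesis using step by auto
    qed
  qed
  show ?case using A B step by auto
qed

lemma sum_nth_set:
  assumes "distinct xs" "t \<le> length xs"
  shows "(\<Sum>i<t. f (xs!i)) = (\<Sum>x\<in>set (take t xs). f x)"
proof -
  have "set (take t xs) = (\<lambda>i. xs!i) ` {..<t}"
    using assms(2) by (simp add: nth_image lessThan_atLeast0)
  moreover have "inj_on (\<lambda>i. xs!i) {..<t}"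
    using assms by (auto simp: inj_on_def nth_eq_iff_index_eq)
  ultimately show ?thesis by (simp add: sum.reindex)
qed

theorem theorem3:
  fixes P :: "nat \<Rightarrow> nat \<Rightarrow> real" and N :: real and D :: nat and M :: "nat list"
  assumes "D \<ge> 2"
    and "N > 0"
    and "\<forall>i\<in>nodes D. \<forall>t\<in>nodes D. i \<noteq> t \<longrightarrow> P i t > 0"
    and "mspa_output P D M"
  shows "R_DF P N M = R_DF_max P N D"
proof -
  note pos = assms(3)
  have R: "M \<noteq> [] \<and> distinct M \<and> hd M = 1 \<and> set M \<subseteq> nodes D \<and> D \<notin> set (butlast M) \<and>
    (\<forall>k. 1 \<le> k \<and> k < length M \<longrightarrow>
       (\<forall>t\<in>nodes D - set (take k M). (\<Sum>i\<in>set (take k M). P i t) \<le> (\<Sum>i\<in>set (take k M). P i (M!k))))"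
    using reach_props[of P D M] assms(1,4) by (auto simp: mspa_output_def)
  have DM: "D \<in> set M" using assms(4) by (auto simp: mspa_output_def)
  have lastM: "last M = D"
  proof (rule ccontr)
    assume "last M \<noteq> D"
    then have "D \<in> set (butlast M)" using DM R
      by (metis append_butlast_last_id in_set_conv_decomp rotate1.simps(2) set_ConsD set_rotate1)
    then show False using R by blast
  qed
  have routeM: "is_route_SD D M" using R lastM by (auto simp: is_route_SD_def is_route_def)
  have len2: "length M' \<ge> 2" if "is_route_SD D M'" for M'
  proof -
    have "M' \<noteq> []" "hd M' = 1" "last M' = D" using that by (auto simp: is_route_SD_def is_route_def)
    show ?thesis
    proof (rule ccontr)
      assume "\<not> 2 \<le> length M'"
      then have "length M' = 1" using \<open>M' \<noteq> []\<close> by (simp add: not_le) (metis length_greater_0_conv One_nat_def less_2_cases not_less0 less_numeral_extra(3))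
      then obtain x where "M' = [x]" using length_Suc_conv[of M' 0] by auto
      then show False using \<open>hd M' = 1\<close> \<open>last M' = D\<close> assms(1) by simp
    qed
  qed
  have mono: "rx_rate P N M1 j \<le> rx_rate P N M2 k"
    if "0 \<le> (\<Sum>i<j. P (M1 ! i) (M1 ! j))" "(\<Sum>i<j. P (M1 ! i) (M1 ! j)) \<le> (\<Sum>i<k. P (M2 ! i) (M2 ! k))"
    for M1 M2 j k
  proof -
    let ?x = "(\<Sum>i<j. P (M1 ! i) (M1 ! j))" and ?y = "(\<Sum>i<k. P (M2 ! i) (M2 ! k))"
    have "?x / N \<le> ?y / N" using that assms(2) by (simp add: divide_right_mono)
    moreover have "0 \<le> ?x / N" using that assms(2) by simp
    ultimately have "log 2 (1 + ?x/N) \<le> log 2 (1 + ?y/N)" by (simp add: log_le_cancel_iff)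
    then show ?thesis unfolding rx_rate_def by simp
  qed
  have finM: "finite (rx_rate P N M ` {1..<length M})" by simp
  have neM: "rx_rate P N M ` {1..<length M} \<noteq> {}" using len2[OF routeM] by auto
  obtain k where k: "k \<in> {1..<length M}" "rx_rate P N M k = R_DF P N M"
    using Min_in[OF finM neM] unfolding R_DF_def by auto
  define A where "A = set (take k M)"
  have DA: "D \<notin> A"
  proof -
    have "k < length M" using k by auto
    then have "take k M = take k (butlast M)" by (simp add: take_butlast)
    then have "A \<subseteq> set (butlast M)" unfolding A_def by (metis set_take_subset)
    then show ?thesis using R by blast
  qed
  have oneA: "1 \<in> A"
  proof -
    have "M ! 0 = 1" using R by (metis hd_conv_nth)
    moreover have "M ! 0 \<in> A" using k unfolding A_def by (auto simp: in_set_conv_nth intro!: exI[of _ 0])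
    ultimately show ?thesis by simp
  qed
  have AD: "A \<subseteq> nodes D" using R unfolding A_def by (meson order.trans set_take_subset)
  have greedy: "\<forall>t\<in>nodes D - A. (\<Sum>i\<in>A. P i t) \<le> (\<Sum>i\<in>A. P i (M!k))"
    using R k unfolding A_def by auto
  have sumM: "(\<Sum>i<k. P (M ! i) (M ! k)) = (\<Sum>i\<in>A. P i (M!k))"
    unfolding A_def using R k sum_nth_set[of M k "\<lambda>x. P x (M!k)"] by auto
  have le: "R_DF P N M' \<le> R_DF P N M" if rM': "is_route_SD D M'" for M'
  proof -
    have M'p: "M' \<noteq> []" "distinct M'" "hd M' = 1" "set M' \<subseteq> nodes D" "last M' = D"
      using rM' by (auto simp: is_route_SD_def is_route_def)
    have ex: "\<exists>j. j < length M' \<and> M' ! j \<notin> A"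
      using M'p DA by (metis diff_less last_conv_nth length_greater_0_conv less_one)
    define j where "j = (LEAST j. j < length M' \<and> M' ! j \<notin> A)"
    have j: "j < length M'" "M' ! j \<notin> A" using LeastI_ex[OF ex] unfolding j_def by auto
    have before: "M' ! i \<in> A" if "i < j" for i
      using not_less_Least[of i "\<lambda>j. j < length M' \<and> M' ! j \<notin> A"] that j unfolding j_def[symmetric]
      by auto
    have j0: "j \<noteq> 0" using j M'p oneA by (metis hd_conv_nth)
    have tj: "set (take j M') \<subseteq> A"
      using before j by (auto simp: in_set_conv_nth)
    have mj: "M' ! j \<in> nodes D" using j M'p by auto
    have s1: "(\<Sum>i<j. P (M' ! i) (M' ! j)) = (\<Sum>x\<in>set (take j M'). P x (M'!j))"
      using sum_nth_set[of M' j "\<lambda>x. P x (M'!j)"] M'p j by auto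
    have nn: "\<forall>x\<in>A. 0 \<le> P x (M'!j)"
      using pos AD mj j by (metis less_eq_real_def subsetD)
    have s2: "(\<Sum>x\<in>set (take j M'). P x (M'!j)) \<le> (\<Sum>x\<in>A. P x (M'!j))"
      by (rule sum_mono2) (use tj nn in \<open>auto simp: A_def\<close>)
    have s3: "(\<Sum>x\<in>A. P x (M'!j)) \<le> (\<Sum>i\<in>A. P i (M!k))"
      using greedy mj j by auto
    have s0: "0 \<le> (\<Sum>i<j. P (M' ! i) (M' ! j))"
      using s1 tj nn by (metis (no_types, lifting) subsetD sum_nonneg)
    have "rx_rate P N M' j \<le> rx_rate P N M k"
      using mono[of M' j M k] s0 s1 s2 s3 sumM by linarith
    moreover have "R_DF P N M' \<le> rx_rate P N M' j"
      unfolding R_DF_def using j j0 by (intro Min_le) auto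
    ultimately show ?thesis using k by simp
  qed
  have fin: "finite {M. is_route_SD D M}"
  proof -
    have "{M. is_route_SD D M} \<subseteq> {xs. set xs \<subseteq> nodes D \<and> length xs \<le> card (nodes D)}"
    proof
      fix xs assume "xs \<in> {M. is_route_SD D M}"
      then have "distinct xs" "set xs \<subseteq> nodes D" by (auto simp: is_route_SD_def is_route_def)
      moreover have "card (set xs) \<le> card (nodes D)"
        using \<open>set xs \<subseteq> nodes D\<close> by (intro card_mono) (auto simp: nodes_def)
      ultimately show "xs \<in> {xs. set xs \<subseteq> nodes D \<and> length xs \<le> card (nodes D)}"
        by (simp add: distinct_card)
    qed
    moreover have "finite {xs. set xs \<subseteq> nodes D \<and> length xs \<le> card (nodes D)}"
      by (rule finite_lists_length_le) (simp add: nodes_def)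
    ultimately show ?thesis by (rule finite_subset)
  qed
  show ?thesis unfolding R_DF_max_def
    by (rule Max_eqI[symmetric]) (use fin routeM le in auto)
qed

end
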